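(* Fix $n$ and suppose that (i) $m_{n}>4/\sqrt{v_{n}}$ and (ii) $r_{n}\geq 4D_{n}/v_{n}^{2}$. Then $K_{n}^{\prime}(z)$ has no zeros inside the disc $\vert z\vert<1/\sqrt{v_{n}}-r_{n}$.
   Context: Let $(\mathcal{A},E)$ be a noncommutative probability space and, for each $n$, let $X_{n,1},\ldots,X_{n,k_n}$ be free, bounded, self-adjoint random variables with $E(X_{n,i})=0$ and $\Vert X_{n,i}\Vert\leq L_{n,i}$. Let $a_{n,i}^{(2)}$ be the second moment of $X_{n,i}$ and $v_n=a_{n,1}^{(2)}+\cdots+a_{n,k_n}^{(2)}$. Let $G_{n,i}(z)=\int\mu_{n,i}(dt)/(z-t)$ be the Cauchy transform of the spectral measure $\mu_{n,i}$ of $X_{n,i}$, and $g_{n,i}(z)=G_{n,i}(1/z)$. Let $R_{n,i},m_{n,i}$ be numbers such that: $R_{n,i}\geq L_{n,i}$; $\vert G_{n,i}(z)\vert\geq m_{n,i}>0$ everywhere on $\vert z\vert=R_{n,i}$; and $g_{n,i}$ has only one zero in $\vert z\vert<R_{n,i}^{-1}$ (e.g. $R_{n,i}=2L_{n,i}$, $m_{n,i}=(4L_{n,i})^{-1}$). Set $m_n=\min_i m_{n,i}$ and $D_n=\sum_{i=1}^{k_n}R_{n,i}(m_{n,i})^{-2}$. Let $S_n=X_{n,1}+\cdots+X_{n,k_n}$ and let $K_n(z)$ be the $K$-function of $S_n$, i.e. the functional inverse (near $0$) of the Cauchy transform of $S_n$; by Voiculescu's addition formula $K_n(z)=\sum_i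 K_{n,i}(z)-(k_n-1)/z$, where $K_{n,i}$ is the inverse of $G_{n,i}$. The Laurent series of $K_n$ converges in $0<\vert z\vert<m_n$, and $K_n$ has a simple pole at $0$ with $K_n(z)=1/z+v_n z+O(z^2)$. *)

theory Defs
  imports "HOL-Probability.Probability"
begin

definition cauchy_transform :: "real measure \<Rightarrow> complex \<Rightarrow> complex" where
  "cauchy_transform \<mu> z = integral\<^sup>L \<mu> (\<lambda>t. inverse (z - complex_of_real t))"

text \<open>g(w) = G(1/w), extended by its limit value 0 at w = 0.\<close>
definition gfun :: "real measure \<Rightarrow> complex \<Rightarrow> complex" where
  "gfun \<mu> w = (if w = 0 then 0 else cauchy_transform \<mu> (1 / w))"

text \<open>The K-function (inverse of G near 0) of a single variable: for 0 < |z| < m,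
  K(z) = 1/w where w is the unique solution of g(w) = z in |w| < 1/R.\<close>
definition Kfun :: "real measure \<Rightarrow> real \<Rightarrow> complex \<Rightarrow> complex" where
  "Kfun \<mu> R z = 1 / (THE w. cmod w < 1 / R \<and> gfun \<mu> w = z)"

text \<open>K-function of the free sum, via Voiculescu's addition formula.\<close>
definition Ksum :: "nat \<Rightarrow> (nat \<Rightarrow> real measure) \<Rightarrow> (nat \<Rightarrow> real) \<Rightarrow> complex \<Rightarrow> complex" where
  "Ksum k \<mu> R z = (\<Sum>i<k. Kfun (\<mu> i) (R i) z) - of_nat (k - 1) / z"

end

theory Submission
  imports Defs "HOL-Complex_Analysis.Complex_Analysis"
begin

locale single = prob_space M for M :: "real measure" +
  fixes R m :: real
  assumes sets_eq: "sets M = sets borel"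
    and bdd: "AE t in M. \<bar>t\<bar> \<le> R"
    and mean0: "(\<integral>t. t \<partial>M) = 0"
    and Rpos: "0 < R" and mpos: "0 < m"
    and Gm: "\<And>z. cmod z = R \<Longrightarrow> m \<le> cmod (cauchy_transform M z)"
    and gzero: "{w. cmod w < 1 / R \<and> gfun M w = 0} = {0}"
begin

lemma meas_borel: "f \<in> borel_measurable borel \<Longrightarrow> f \<in> borel_measurable M"
  by (metis measurable_cong_sets sets_eq)

definition "Mo n = (\<integral>t. t ^ n \<partial>M)"

lemma cont_meas: "continuous_on UNIV f \<Longrightarrow> f \<in> borel_measurable M"
  by (intro meas_borel borel_measurable_continuous_onI)

lemma int_pow: "integrable M (\<lambda>t. t ^ n)"
proof (rule integrable_const_bound[where B="R^n"])
  show "AE x in M. norm (x ^ n) \<le> R ^ n"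
    using bdd by eventually_elim (simp add: power_abs power_mono)
  show "(\<lambda>t. t ^ n) \<in> borel_measurable M"
    by (intro cont_meas continuous_intros)
qed

lemma Mo_bound: "\<bar>Mo n\<bar> \<le> R ^ n"
proof -
  have "\<bar>Mo n\<bar> \<le> (\<integral>t. norm (t ^ n) \<partial>M)"
    unfolding Mo_def using integral_norm_bound[of M "\<lambda>t. t^n"] by simp
  also have "\<dots> \<le> (\<integral>t. R ^ n \<partial>M)"
    using bdd integrable_norm[OF int_pow[of n]]
    by (intro integral_mono_AE) (auto elim!: eventually_mono simp: power_abs power_mono)
  also have "\<dots> = R ^ n" by (simp add: prob_space)
  finally show ?thesis .
qed

lemma Mo0: "Mo 0 = 1" by (simp add: Mo_def prob_space)
lemma Mo1: "Mo 1 = 0" using mean0 by (simp add: Mo_def)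

definition "cT n = complex_of_real (Mo (n + 3))"
definition "Tf w = (\<Sum>n. cT n * w ^ n)"
definition "aa = complex_of_real (Mo 2)"
definition "Pf w = 1 + aa * w^2 + w^3 * Tf w"

lemma summ_T: assumes "norm w < 1 / R" shows "summable (\<lambda>n. norm (cT n * w ^ n))"
proof (rule summable_comparison_test')
  have "norm w * R < 1" using assms Rpos by (simp add: field_simps)
  then show "summable (\<lambda>n. R^3 * (norm w * R) ^ n)"
    using Rpos by (intro summable_mult summable_geometric) (simp add: abs_of_nonneg)
  fix n :: nat
  have "norm (cT n * w ^ n) = \<bar>Mo (n+3)\<bar> * norm w ^ n"
    by (simp add: cT_def norm_mult norm_power)
  also have "\<dots> \<le> R^(n+3) * norm w ^ n"
    using Mo_bound by (intro mult_right_mono) auto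
  also have "\<dots> = R^3 * (norm w * R) ^ n" by (simp add: power_add power_mult_distrib)
  finally show "norm (norm (cT n * w ^ n)) \<le> R^3 * (norm w * R) ^ n" by simp
qed

lemma conv_T: "ereal (1 / R) \<le> conv_radius cT"
proof (rule conv_radius_geI_ex')
  fix r :: real assume r: "0 < r" "ereal r < ereal (1 / R)"
  have "norm (complex_of_real r) < 1 / R" using r by simp
  from summable_norm_cancel[OF summ_T[OF this]] show "summable (\<lambda>n. cT n * complex_of_real r ^ n)" .
qed

lemma Tf_deriv: assumes "norm w < 1 / R"
  shows "(Tf has_field_derivative (\<Sum>n. diffs cT n * w ^ n)) (at w within A)"
  unfolding Tf_def
proof (rule has_field_derivative_powser)
  have "ereal (norm w) < ereal (1 / R)" using assms by simp
  also have "\<dots> \<le> conv_radius cT" by (rule conv_T)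
  finally show "ereal (norm w) < conv_radius cT" .
qed

lemma Tf_holo: "Tf holomorphic_on ball 0 (1 / R)"
  unfolding holomorphic_on_def field_differentiable_def
  using Tf_deriv mem_ball_0 by blast

lemma Pf_holo: "Pf holomorphic_on ball 0 (1 / R)"
  unfolding Pf_def by (intro holomorphic_intros Tf_holo)

lemma gfun_eq: assumes w: "norm w < 1 / R" shows "gfun M w = w * Pf w"
proof (cases "w = 0")
  case True then show ?thesis by (simp add: gfun_def)
next
  case False
  define f where "f n t = (w * complex_of_real t) ^ n" for n t
  have wR: "norm w * R < 1" using w Rpos by (simp add: field_simps)
  have nwt: "norm (w * complex_of_real t) < 1" if "\<bar>t\<bar> \<le> R" for t
  proof -
    have "norm (w * complex_of_real t) = norm w * \<bar>t\<bar>" by (simp add: norm_mult)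
    also have "\<dots> \<le> norm w * R" using that by (intro mult_left_mono) auto
    finally show ?thesis using wR by simp
  qed
  have fmeas: "f n \<in> borel_measurable M" for n
    unfolding f_def by (intro cont_meas continuous_intros)
  have fbound: "AE t in M. norm (f n t) \<le> (norm w * R) ^ n" for n
    using bdd
  proof eventually_elim
    case (elim t)
    have "norm (f n t) = (norm w * \<bar>t\<bar>) ^ n" by (simp add: f_def norm_mult norm_power)
    also have "\<dots> \<le> (norm w * R) ^ n" using elim by (intro power_mono mult_left_mono) auto
    finally show ?case .
  qed
  have intf: "integrable M (f n)" for n
    by (rule integrable_const_bound[OF fbound fmeas])
  have AEsumm: "AE t in M. summable (\<lambda>n. norm (f n t))"
    using bdd
  proof eventually_elim
    case (elim t)
    have "norm (norm (w * complex_of_real t)) < 1" using nwt[OF elim] by simp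
    then have "summable (\<lambda>n. (norm (w * complex_of_real t)) ^ n)" by (rule summable_geometric)
    then show ?case by (simp add: f_def norm_power)
  qed
  have intnorm: "(\<integral>t. norm (f n t) \<partial>M) \<le> (norm w * R) ^ n" for n
  proof -
    have "(\<integral>t. norm (f n t) \<partial>M) \<le> (\<integral>t. (norm w * R) ^ n \<partial>M)"
      using fbound[of n] integrable_norm[OF intf[of n]] by (intro integral_mono_AE) auto
    also have "\<dots> = (norm w * R) ^ n" by (simp add: prob_space)
    finally show ?thesis .
  qed
  have summint: "summable (\<lambda>n. (\<integral>t. norm (f n t) \<partial>M))"
  proof (rule summable_comparison_test')
    show "summable (\<lambda>n. (norm w * R) ^ n)"
      using wR Rpos by (intro summable_geometric) (simp add: abs_of_nonneg)
    show "norm (\<integral>t. norm (f n t) \<partial>M) \<le> (norm w * R) ^ n" for n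
      using intnorm[of n] by (simp add: abs_of_nonneg integral_nonneg_AE)
  qed
  have sums1: "(\<lambda>n. integral\<^sup>L M (f n)) sums (\<integral>t. (\<Sum>n. f n t) \<partial>M)"
    by (rule sums_integral[OF intf AEsumm summint])
  have intsum: "integrable M (\<lambda>t. (\<Sum>n. f n t))"
    by (rule integrable_suminf[OF intf AEsumm summint])
  have intfn: "integral\<^sup>L M (f n) = complex_of_real (Mo n) * w ^ n" for n
  proof -
    have "integral\<^sup>L M (f n) = (\<integral>t. w ^ n * complex_of_real (t ^ n) \<partial>M)"
      unfolding f_def by (simp add: power_mult_distrib)
    also have "\<dots> = w ^ n * (\<integral>t. complex_of_real (t ^ n) \<partial>M)"
      by (rule integral_mult_right_zero)
    also have "\<dots> = w ^ n * complex_of_real (Mo n)"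
      unfolding Mo_def by (subst integral_complex_of_real) (rule refl)
    finally show ?thesis by simp
  qed
  define S where "S = (\<integral>t. (\<Sum>n. f n t) \<partial>M)"
  have sums2: "(\<lambda>n. complex_of_real (Mo n) * w ^ n) sums S"
    using sums1 unfolding S_def intfn .
  have AEeq: "AE t in M. inverse (1 / w - complex_of_real t) = w * (\<Sum>n. f n t)"
    using bdd
  proof eventually_elim
    case (elim t)
    have n1: "norm (w * complex_of_real t) < 1" by (rule nwt[OF elim])
    then have "(\<Sum>n. f n t) = 1 / (1 - w * complex_of_real t)"
      unfolding f_def by (rule suminf_geometric)
    moreover have "1 - w * complex_of_real t \<noteq> 0" using n1 by auto
    moreover have "1 / w - complex_of_real t = (1 - w * complex_of_real t) / w"
      using False by (simp add: field_simps)
    ultimately show ?case by (simp only: inverse_divide) simp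
  qed
  have "gfun M w = (\<integral>t. inverse (1 / w - complex_of_real t) \<partial>M)"
    using False by (simp add: gfun_def cauchy_transform_def)
  also have "\<dots> = (\<integral>t. w * (\<Sum>n. f n t) \<partial>M)"
  proof (rule integral_cong_AE)
    show "(\<lambda>t. inverse (1 / w - complex_of_real t)) \<in> borel_measurable M"
      by (intro meas_borel) measurable
    show "(\<lambda>t. w * (\<Sum>n. f n t)) \<in> borel_measurable M"
      using borel_measurable_integrable[OF intsum] by measurable
  qed (rule AEeq)
  also have "\<dots> = w * S" unfolding S_def by simp
  finally have gS: "gfun M w = w * S" .
  have Tsums: "(\<lambda>i. cT i * w ^ i) sums Tf w"
    unfolding Tf_def using summable_norm_cancel[OF summ_T[OF w]] by (rule summable_sums)
  have A: "(\<lambda>i. complex_of_real (Mo (i + 3)) * w ^ (i + 3)) sums (S - (\<Sum>i<3. complex_of_real (Mo i) * w ^ i))"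
    using sums_split_initial_segment[OF sums2, of 3] by simp
  have B: "(\<lambda>i. complex_of_real (Mo (i + 3)) * w ^ (i + 3)) sums (w ^ 3 * Tf w)"
  proof -
    have "(\<lambda>i. w ^ 3 * (cT i * w ^ i)) sums (w ^ 3 * Tf w)" by (rule sums_mult[OF Tsums])
    then show ?thesis by (simp add: cT_def power_add mult_ac)
  qed
  have "S - (\<Sum>i<3. complex_of_real (Mo i) * w ^ i) = w ^ 3 * Tf w"
    using sums_unique2[OF A B] .
  moreover have "(\<Sum>i<3. complex_of_real (Mo i) * w ^ i) = 1 + aa * w ^ 2"
    by (simp add: numeral_3_eq_3 lessThan_Suc Mo0 Mo1[simplified] aa_def power2_eq_square numeral_2_eq_2)
  ultimately have "S = Pf w" unfolding Pf_def by (simp add: algebra_simps)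
  then show ?thesis using gS by simp
qed

end

context single begin

abbreviation "G \<equiv> cauchy_transform M"

lemma int_c: assumes "cmod c = R" shows "integrable M (\<lambda>t. inverse (c - complex_of_real t))"
proof (rule ccontr)
  assume "\<not> ?thesis"
  then have "G c = 0" unfolding cauchy_transform_def by (rule not_integrable_integral_eq)
  with Gm[OF assms] mpos show False by simp
qed

lemma K1:
  assumes lim: "z \<longlonglongrightarrow> c" and c: "cmod c = R" and zR: "\<And>n. cmod (z n) > R"
  shows "eventually (\<lambda>n. \<forall>t. \<bar>t\<bar> \<le> R \<longrightarrow> cmod (c - complex_of_real t) / 2 \<le> cmod (z n - complex_of_real t)) sequentially"
proof (cases "Im c = 0")
  case False
  have "eventually (\<lambda>n. dist (z n) c < \<bar>Im c\<bar> / 2) sequentially"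
    using lim False by (intro tendstoD) auto
  then show ?thesis
  proof eventually_elim
    case (elim n)
    show ?case
    proof (intro allI impI)
      fix t :: real
      have "\<bar>Im c\<bar> \<le> cmod (c - complex_of_real t)"
        using abs_Im_le_cmod[of "c - complex_of_real t"] by simp
      moreover have "cmod (c - complex_of_real t) \<le> cmod (z n - complex_of_real t) + cmod (z n - c)"
        using norm_triangle_ineq4[of "z n - complex_of_real t" "z n - c"] by (simp add: algebra_simps)
      ultimately show "cmod (c - complex_of_real t) / 2 \<le> cmod (z n - complex_of_real t)"
        using elim by (simp add: dist_norm)
    qed
  qed
next
  case True
  define x where "x = Re c"
  have cx: "c = complex_of_real x" using True by (simp add: x_def complex_eq_iff)
  have ax: "\<bar>x\<bar> = R" using c cx by simp
  have "eventually (\<lambda>n. dist (z n) c < R / 2) sequentially"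
    using lim Rpos by (intro tendstoD) auto
  then show ?thesis
  proof eventually_elim
    case (elim n)
    show ?case
    proof (intro allI impI)
      fix t :: real assume t: "\<bar>t\<bar> \<le> R"
      have tri1: "cmod (z n) \<le> cmod (z n - complex_of_real t) + \<bar>t\<bar>"
        using norm_triangle_ineq4[of "z n - complex_of_real t" "- complex_of_real t"] by simp
      have tri2: "cmod (c - complex_of_real t) \<le> cmod (z n - complex_of_real t) + cmod (z n - c)"
        using norm_triangle_ineq4[of "z n - complex_of_real t" "z n - c"] by (simp add: algebra_simps)
      have ct: "cmod (c - complex_of_real t) = \<bar>x - t\<bar>" unfolding cx
        by (metis norm_of_real of_real_diff)
      show "cmod (c - complex_of_real t) / 2 \<le> cmod (z n - complex_of_real t)"
      proof (cases "0 \<le> x * t")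
        case True
        then have "\<bar>x - t\<bar> = R - \<bar>t\<bar>" using ax t
          by (cases "0 \<le> x"; cases "0 \<le> t") (auto simp: zero_le_mult_iff)
        then show ?thesis using tri1 zR[of n] ct by simp
      next
        case False
        then have "\<bar>x - t\<bar> \<ge> R" using ax t
          by (cases "0 \<le> x"; cases "0 \<le> t") (auto simp: zero_le_mult_iff)
        then show ?thesis using tri2 elim ct by (simp add: dist_norm)
      qed
    qed
  qed
qed

lemma seqlow:
  assumes lim: "z \<longlonglongrightarrow> c" and c: "cmod c = R" and zR: "\<And>n. cmod (z n) > R" and e: "0 < e"
  shows "eventually (\<lambda>n. m - e < cmod (G (z n))) sequentially"
proof -
  define A where "A = {t. complex_of_real t = c}"
  have A_eq: "A = (if Im c = 0 then {Re c} else {})"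
    unfolding A_def by (auto simp: complex_eq_iff)
  have A_sets: "A \<in> sets M" unfolding A_eq sets_eq by auto
  define p where "p = measure M A"
  define s where "s n t = (if t \<in> A then 0 else inverse (z n - complex_of_real t))" for n t
  have zc: "z n \<noteq> c" for n using zR[of n] c by auto
  have s_meas: "s n \<in> borel_measurable M" for n
    unfolding s_def using A_sets by (intro measurable_If_set meas_borel) (auto, measurable)
  have s_bound: "AE t in M. norm (s n t) \<le> 1 / (cmod (z n) - R)" for n
    using bdd
  proof eventually_elim
    case (elim t)
    have "cmod (z n) \<le> cmod (z n - complex_of_real t) + \<bar>t\<bar>"
      using norm_triangle_ineq4[of "z n - complex_of_real t" "- complex_of_real t"] by simp
    then have "cmod (z n) - R \<le> cmod (z n - complex_of_real t)" using elim by simp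
    moreover have "0 < cmod (z n) - R" using zR[of n] by simp
    ultimately have "inverse (cmod (z n - complex_of_real t)) \<le> inverse (cmod (z n) - R)"
      by (rule le_imp_inverse_le)
    then show ?case unfolding s_def using zR[of n]
      by (auto simp: norm_inverse inverse_eq_divide norm_divide)
  qed
  have s_int: "integrable M (s n)" for n
    by (rule integrable_const_bound[OF s_bound s_meas])
  have decomp: "G (z n) = integral\<^sup>L M (s n) + p *\<^sub>R inverse (z n - c)" for n
  proof -
    have hb: "has_bochner_integral M (\<lambda>t. s n t + indicator A t *\<^sub>R inverse (z n - c)) (integral\<^sup>L M (s n) + p *\<^sub>R inverse (z n - c))"
      unfolding p_def
      by (intro has_bochner_integral_add has_bochner_integral_integrable s_int has_bochner_integral_indicator A_sets) (auto simp: less_top[symmetric])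
    have "(\<lambda>t. s n t + indicator A t *\<^sub>R inverse (z n - c)) = (\<lambda>t. inverse (z n - complex_of_real t))"
      by (auto simp: s_def A_def indicator_def)
    with hb show ?thesis unfolding cauchy_transform_def
      using has_bochner_integral_integral_eq by metis
  qed
  obtain N where N: "\<And>n. n \<ge> N \<Longrightarrow> \<forall>t. \<bar>t\<bar> \<le> R \<longrightarrow> cmod (c - complex_of_real t) / 2 \<le> cmod (z n - complex_of_real t)"
    using K1[OF lim c zR] unfolding eventually_sequentially by blast
  have limS: "(\<lambda>n. integral\<^sup>L M (s n)) \<longlonglongrightarrow> G c"
  proof (rule LIMSEQ_offset[where k=N])
    show "(\<lambda>n. integral\<^sup>L M (s (n + N))) \<longlonglongrightarrow> G c"
      unfolding cauchy_transform_def
    proof (rule integral_dominated_convergence[where w="\<lambda>t. 2 * norm (inverse (c - complex_of_real t))"])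
      show "(\<lambda>t. inverse (c - complex_of_real t)) \<in> borel_measurable M"
        by (intro meas_borel) measurable
      show "\<And>i. s (i + N) \<in> borel_measurable M" by (rule s_meas)
      show "integrable M (\<lambda>t. 2 * norm (inverse (c - complex_of_real t)))"
        by (intro integrable_mult_right integrable_norm int_c c)
      show "AE t in M. (\<lambda>i. s (i + N) t) \<longlonglongrightarrow> inverse (c - complex_of_real t)"
      proof (rule AE_I2)
        fix t assume "t \<in> space M"
        show "(\<lambda>i. s (i + N) t) \<longlonglongrightarrow> inverse (c - complex_of_real t)"
        proof (cases "t \<in> A")
          case True
          then show ?thesis by (simp add: s_def A_def)
        next
          case False
          then have "c - complex_of_real t \<noteq> 0" by (auto simp: A_def)
          moreover have "(\<lambda>i. z (i + N) - complex_of_real t) \<longlonglongrightarrow> c - complex_of_real t"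
            by (intro tendsto_diff tendsto_const LIMSEQ_ignore_initial_segment lim)
          ultimately have "(\<lambda>i. inverse (z (i + N) - complex_of_real t)) \<longlonglongrightarrow> inverse (c - complex_of_real t)"
            by (rule tendsto_inverse[rotated])
          then show ?thesis using False by (simp add: s_def)
        qed
      qed
      show "AE t in M. norm (s (i + N) t) \<le> 2 * norm (inverse (c - complex_of_real t))" for i
        using bdd
      proof eventually_elim
        case (elim t)
        show ?case
        proof (cases "t \<in> A")
          case True then show ?thesis by (simp add: s_def)
        next
          case False
          then have nz: "c - complex_of_real t \<noteq> 0" by (auto simp: A_def)
          have le: "cmod (c - complex_of_real t) / 2 \<le> cmod (z (i + N) - complex_of_real t)"
            using N[of "i + N"] elim by auto
          have pos: "0 < cmod (c - complex_of_real t) / 2" using nz by simp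
          have "norm (s (i + N) t) = inverse (cmod (z (i + N) - complex_of_real t))"
            using False by (simp add: s_def norm_inverse)
          also have "\<dots> \<le> inverse (cmod (c - complex_of_real t) / 2)"
            using le pos by (rule le_imp_inverse_le)
          also have "\<dots> = 2 * norm (inverse (c - complex_of_real t))"
            by (simp add: norm_inverse inverse_eq_divide norm_divide)
          finally show ?thesis .
        qed
      qed
    qed
  qed
  have Gc: "m \<le> cmod (G c)" by (rule Gm[OF c])
  show ?thesis
  proof (cases "p = 0")
    case True
    have "(\<lambda>n. cmod (G (z n))) \<longlonglongrightarrow> cmod (G c)"
      using limS unfolding decomp True by (simp add: tendsto_norm)
    moreover have "m - e < cmod (G c)" using Gc e by simp
    ultimately show ?thesis by (rule order_tendstoD)
  next
    case False
    have p0: "0 < p" using False measure_nonneg[of M A] unfolding p_def by linarith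
    define C where "C = cmod (G c) + 1"
    have C0: "0 < C" unfolding C_def using norm_ge_zero[of "G c"] by linarith
    have ev1: "eventually (\<lambda>n. cmod (integral\<^sup>L M (s n)) < C) sequentially"
      unfolding C_def by (rule order_tendstoD(2)[OF tendsto_norm[OF limS]]) simp
    have ev2: "eventually (\<lambda>n. dist (z n) c < p / (C + m)) sequentially"
      using lim p0 C0 mpos by (intro tendstoD) auto
    show ?thesis using ev1 ev2
    proof eventually_elim
      case (elim n)
      have d0: "0 < cmod (z n - c)" using zc[of n] by simp
      have "cmod (z n - c) < p / (C + m)" using elim(2) by (simp add: dist_norm)
      then have "cmod (z n - c) * (C + m) < p" using C0 mpos by (simp add: pos_less_divide_eq)
      then have "C + m < p / cmod (z n - c)" using d0 by (simp add: pos_less_divide_eq mult.commute)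
      also have "p / cmod (z n - c) = cmod (p *\<^sub>R inverse (z n - c))"
        using p0 by (simp only: norm_scaleR norm_inverse abs_of_pos divide_inverse)
      also have "\<dots> \<le> cmod (G (z n)) + cmod (integral\<^sup>L M (s n))"
        unfolding decomp using norm_triangle_ineq4[of "integral\<^sup>L M (s n) + p *\<^sub>R inverse (z n - c)" "integral\<^sup>L M (s n)"]
        by (simp add: add.commute)
      finally show ?case using elim(1) mpos e by simp
    qed
  qed
qed

lemma boundary: assumes e: "0 < e"
  shows "\<exists>\<delta>>0. \<forall>z. R < cmod z \<and> cmod z < R + \<delta> \<longrightarrow> m - e < cmod (G z)"
proof (rule ccontr)
  assume H: "\<not> ?thesis"
  have "\<forall>n::nat. \<exists>z. R < cmod z \<and> cmod z < R + inverse (real (Suc n)) \<and> \<not> (m - e < cmod (G z))"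
  proof
    fix n :: nat
    have "0 < inverse (real (Suc n))" by simp
    then show "\<exists>z. R < cmod z \<and> cmod z < R + inverse (real (Suc n)) \<and> \<not> (m - e < cmod (G z))"
      using H by blast
  qed
  then obtain zs where zs: "\<And>n. R < cmod (zs n)" "\<And>n. cmod (zs n) < R + inverse (real (Suc n))"
      "\<And>n. \<not> (m - e < cmod (G (zs n)))"
    by metis
  have inc: "zs n \<in> cball 0 (R + 1)" for n
  proof -
    have "inverse (real (Suc n)) \<le> 1" by (simp add: inverse_le_1_iff)
    then show ?thesis using zs(2)[of n] by simp
  qed
  obtain l r where l: "l \<in> cball 0 (R + 1)" and r: "strict_mono r" and lim: "(zs \<circ> r) \<longlonglongrightarrow> l"
    using compact_imp_seq_compact[OF compact_cball, unfolded seq_compact_def, rule_format, of zs 0 "R+1"] inc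
    by blast
  have limn: "(\<lambda>n. norm ((zs \<circ> r) n)) \<longlonglongrightarrow> norm l" by (rule tendsto_norm[OF lim])
  have "R \<le> norm l"
    by (rule LIMSEQ_le_const[OF limn]) (use zs(1) less_imp_le in auto)
  moreover have "norm l \<le> R"
  proof -
    have i0: "(\<lambda>n. inverse (real (Suc (r n)))) \<longlonglongrightarrow> 0"
      using LIMSEQ_subseq_LIMSEQ[OF LIMSEQ_inverse_real_of_nat r] by (simp add: o_def)
    have lr: "(\<lambda>n. R + inverse (real (Suc (r n)))) \<longlonglongrightarrow> R + 0"
      by (intro tendsto_add tendsto_const i0)
    have "norm l \<le> R + 0"
      by (rule LIMSEQ_le[OF limn lr]) (use zs(2) less_imp_le in auto)
    then show ?thesis by simp
  qed
  ultimately have nl: "cmod l = R" by simp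
  have zr: "\<And>n. cmod ((zs \<circ> r) n) > R" using zs(1) by simp
  from seqlow[OF lim nl zr e] obtain N where "\<And>n. n \<ge> N \<Longrightarrow> m - e < cmod (G ((zs \<circ> r) n))"
    unfolding eventually_sequentially by blast
  from this[of N] zs(3)[of "r N"] show False by simp
qed

end

context single begin

abbreviation "g \<equiv> gfun M"
abbreviation "B \<equiv> ball (0::complex) (1 / R)"

lemma g_eq_on: "w \<in> B \<Longrightarrow> g w = w * Pf w" using gfun_eq by simp

lemma g_holo: "g holomorphic_on B"
  by (rule holomorphic_transform[of "\<lambda>w. w * Pf w"]) (auto intro!: holomorphic_intros Pf_holo simp: g_eq_on)

lemma g0: "g 0 = 0" by (simp add: gfun_def)
lemma Pf0: "Pf 0 = 1" by (simp add: Pf_def)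
lemma zeroB: "0 \<in> B" using Rpos by simp

lemma g_deriv0: "(g has_field_derivative 1) (at 0)"
proof -
  have "(Pf has_field_derivative deriv Pf 0) (at 0)"
    by (rule holomorphic_derivI[OF Pf_holo open_ball zeroB])
  from DERIV_mult[OF DERIV_ident this]
  have "((\<lambda>w. w * Pf w) has_field_derivative 1) (at 0)" by (simp add: Pf0)
  then show ?thesis
    by (rule has_field_derivative_transform_within_open[OF _ open_ball zeroB]) (simp add: g_eq_on)
qed

lemma zorder_g0: "zorder g 0 = 1"
proof -
  have "zorder g 0 = int (nat 1)"
  proof (rule zorder_zero_eqI[OF g_holo open_ball zeroB])
    show "\<And>i. i < nat (int (nat 1)) \<Longrightarrow> (deriv ^^ i) g 0 = 0" by (simp add: g0)
    show "(deriv ^^ nat (int (nat 1))) g 0 \<noteq> 0" using DERIV_imp_deriv[OF g_deriv0] by simp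
  qed simp
  then show ?thesis by simp
qed

lemma bdw: "\<exists>\<rho>0. 10 / (11 * R) \<le> \<rho>0 \<and> \<rho>0 < 1 / R \<and>
   (\<forall>w. \<rho>0 < cmod w \<and> cmod w < 1 / R \<longrightarrow> 9 * m / 10 < cmod (g w))"
proof -
  obtain \<delta> where d: "\<delta> > 0" and H: "\<And>z. R < cmod z \<Longrightarrow> cmod z < R + \<delta> \<Longrightarrow> m - m / 10 < cmod (G z)"
    using boundary[of "m / 10"] mpos by auto
  define \<rho>0 where "\<rho>0 = max (1 / (R + \<delta>)) (10 / (11 * R))"
  have "1 / (R + \<delta>) < 1 / R" using d Rpos by (simp add: frac_less2)
  moreover have "10 / (11 * R) < 1 / R" using Rpos by (simp add: field_simps)
  ultimately have lt: "\<rho>0 < 1 / R" unfolding \<rho>0_def by simp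
  have "9 * m / 10 < cmod (g w)" if w: "\<rho>0 < cmod w" "cmod w < 1 / R" for w
  proof -
    have w1: "1 / (R + \<delta>) < cmod w" using w(1) unfolding \<rho>0_def by simp
    have wpos: "0 < cmod w" using w1 d Rpos by (smt (verit) divide_pos_pos)
    then have w0: "w \<noteq> 0" by auto
    have "R < 1 / cmod w" using w(2) wpos Rpos by (simp add: field_simps)
    moreover have "1 / cmod w < R + \<delta>" using w1 wpos d Rpos by (simp add: field_simps)
    ultimately have "m - m / 10 < cmod (G (1 / w))" using H by (simp add: norm_divide)
    then show ?thesis using w0 by (simp add: gfun_def)
  qed
  then show ?thesis using lt unfolding \<rho>0_def by (intro exI[of _ \<rho>0]) (auto simp: \<rho>0_def)
qed

lemma count:
  assumes r0: "0 \<le> \<rho>0" and r01: "\<rho>0 < \<rho>1" and r1: "\<rho>1 < 1 / R"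
    and bd: "\<forall>w. \<rho>0 < cmod w \<and> cmod w < 1 / R \<longrightarrow> 9 * m / 10 < cmod (g w)"
    and z: "cmod z < 9 * m / 10"
  shows "\<exists>!p. p \<in> ball 0 \<rho>1 \<and> g p = z"
proof -
  define \<rho>2 where "\<rho>2 = (\<rho>1 + 1 / R) / 2"
  have r12: "\<rho>1 < \<rho>2" "\<rho>2 < 1 / R" using r1 unfolding \<rho>2_def by auto
  have r1pos: "0 < \<rho>1" using r0 r01 by simp
  define s where "s = ball (0::complex) \<rho>2"
  have sB: "s \<subseteq> B" "cball 0 \<rho>2 \<subseteq> B" using r12 unfolding s_def by auto
  have Fholo: "(\<lambda>p. g p + - z) holomorphic_on B" by (intro holomorphic_intros g_holo)
  have nonconst: "\<not> (\<lambda>p. g p + - z) constant_on B"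
  proof
    assume "(\<lambda>p. g p + - z) constant_on B"
    then obtain c where c: "\<And>p. p \<in> B \<Longrightarrow> g p + - z = c" unfolding constant_on_def by blast
    define p where "p = complex_of_real (1 / (2 * R))"
    have np: "cmod p = 1 / (2 * R)" unfolding p_def using Rpos by (simp only: norm_of_real) simp
    have "1 / (2 * R) < 1 / R" using Rpos by (simp add: frac_less2)
    then have pB: "p \<in> B" using np by simp
    have "g p + - z = g 0 + - z" using c[OF pB] c[OF zeroB] by (simp only:)
    then have "g p = 0" using g0 by simp
    then have "p \<in> {w. cmod w < 1 / R \<and> gfun M w = 0}" using pB by simp
    then have "p = 0" using gzero by blast
    then show False using Rpos by (simp add: p_def)
  qed
  have finK: "finite {p \<in> cball 0 \<rho>2. g p + - z = 0}"
    by (rule holomorphic_compact_finite_zeros[OF Fholo open_ball convex_connected[OF convex_ball] compact_cball sB(2) nonconst])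
  have fin1: "finite {p \<in> s. g p + - z = 0}"
    by (rule finite_subset[OF _ finK]) (auto simp: s_def)
  have zf: "{p \<in> s. g p = 0} = {0}"
  proof -
    have "{p \<in> s. g p = 0} \<subseteq> {w. cmod w < 1 / R \<and> gfun M w = 0}" using sB(1) by auto
    then have "{p \<in> s. g p = 0} \<subseteq> {0}" using gzero by simp
    moreover have "0 \<in> s" using r12 r1pos by (simp add: s_def)
    ultimately show ?thesis using g0 by auto
  qed
  have circ_in: "path_image (circlepath 0 \<rho>1) \<subseteq> s"
    using r1pos r12 by (auto simp: s_def)
  have on_circ: "cmod (- z) < cmod (g p)" if "p \<in> path_image (circlepath 0 \<rho>1)" for p
  proof -
    have "cmod p = \<rho>1" using that r1pos by simp
    then have "9 * m / 10 < cmod (g p)" using bd r01 r1 by auto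
    then show ?thesis using z by simp
  qed
  have outside0: "winding_number (circlepath 0 \<rho>1) p = 0" if "\<rho>1 < cmod p" for p
    by (rule winding_number_zero_outside[of _ "cball 0 \<rho>1"]) (use that r1pos in auto)
  have RT: "(\<Sum>p\<in>{p \<in> s. g p + - z = 0}. winding_number (circlepath 0 \<rho>1) p * of_int (zorder (\<lambda>p. g p + - z) p))
          = (\<Sum>p\<in>{p \<in> s. g p = 0}. winding_number (circlepath 0 \<rho>1) p * of_int (zorder g p))"
  proof (rule Rouche_theorem[where f=g and g="\<lambda>_. - z" and s=s and \<gamma>="circlepath 0 \<rho>1"])
    show "open s" unfolding s_def by simp
    show "connected s" unfolding s_def by (simp add: convex_connected)
    show "finite {p \<in> s. g p + - z = 0}" by (rule fin1)
    show "finite {p \<in> s. g p = 0}" unfolding zf by simp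
    show "g holomorphic_on s" by (rule holomorphic_on_subset[OF g_holo sB(1)])
    show "(\<lambda>_. - z) holomorphic_on s" by simp
    show "valid_path (circlepath 0 \<rho>1)" by simp
    show "pathfinish (circlepath 0 \<rho>1) = pathstart (circlepath 0 \<rho>1)" by simp
    show "path_image (circlepath 0 \<rho>1) \<subseteq> s" by (rule circ_in)
    show "\<forall>p\<in>path_image (circlepath 0 \<rho>1). cmod (- z) < cmod (g p)" using on_circ by blast
    show "\<forall>p. p \<notin> s \<longrightarrow> winding_number (circlepath 0 \<rho>1) p = 0"
      using outside0 r12 by (auto simp: s_def)
  qed
  also have "\<dots> = 1" unfolding zf using zorder_g0 winding_number_circlepath_centre[OF r1pos] by simp
  finally have RT1: "(\<Sum>p\<in>{p \<in> s. g p + - z = 0}. winding_number (circlepath 0 \<rho>1) p * of_int (zorder (\<lambda>p. g p + - z) p)) = 1" .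
  define Z where "Z = {p \<in> ball 0 \<rho>1. g p = z}"
  have ZS: "Z \<subseteq> {p \<in> s. g p + - z = 0}" using r12 by (auto simp: Z_def s_def)
  have finZ: "finite Z" by (rule finite_subset[OF ZS fin1])
  have wn: "winding_number (circlepath 0 \<rho>1) p * of_int (zorder (\<lambda>p. g p + - z) p)
      = (if p \<in> Z then of_int (zorder (\<lambda>p. g p + - z) p) else 0)" if p: "p \<in> {p \<in> s. g p + - z = 0}" for p
  proof (cases "p \<in> Z")
    case True
    then have "winding_number (circlepath 0 \<rho>1) p = 1"
      by (intro winding_number_circlepath) (auto simp: Z_def)
    then show ?thesis using True by simp
  next
    case False
    have gp: "g p = z" using p by (simp add: add_eq_0_iff)
    have "\<rho>1 \<le> cmod p" using False gp by (auto simp: Z_def)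
    moreover have "cmod p \<noteq> \<rho>1"
    proof
      assume "cmod p = \<rho>1"
      then have "p \<in> path_image (circlepath 0 \<rho>1)" using r1pos by simp
      from on_circ[OF this] gp show False by simp
    qed
    ultimately have "\<rho>1 < cmod p" by simp
    then show ?thesis using False outside0 by simp
  qed
  have "(\<Sum>p\<in>Z. of_int (zorder (\<lambda>p. g p + - z) p)) = (1::complex)"
  proof -
    have e1: "(\<Sum>p\<in>{p \<in> s. g p + - z = 0}. if p \<in> Z then (of_int (zorder (\<lambda>p. g p + - z) p) :: complex) else 0)
        = (\<Sum>p\<in>{p \<in> s. g p + - z = 0} \<inter> Z. of_int (zorder (\<lambda>p. g p + - z) p))"
      by (rule sum.inter_restrict[OF fin1, symmetric])
    have e2: "{p \<in> s. g p + - z = 0} \<inter> Z = Z" using ZS by blast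
    have e3: "(\<Sum>p\<in>{p \<in> s. g p + - z = 0}. if p \<in> Z then (of_int (zorder (\<lambda>p. g p + - z) p) :: complex) else 0) = 1"
      using RT1 wn by (simp only: cong: sum.cong)
    show ?thesis using e1 e2 e3 by simp
  qed
  then have sumZ: "(\<Sum>p\<in>Z. zorder (\<lambda>p. g p + - z) p) = 1"
    by (metis of_int_eq_1_iff of_int_sum)
  have pos: "1 \<le> zorder (\<lambda>p. g p + - z) p" if "p \<in> Z" for p
  proof -
    have ps: "p \<in> s" using that ZS by auto
    have "\<not> p islimpt {p \<in> s. g p + - z = 0}" by (rule islimpt_finite[OF fin1])
    then have ev1: "eventually (\<lambda>y. y \<notin> {p \<in> s. g p + - z = 0}) (at p)"
      by (simp add: islimpt_iff_eventually)
    have ev2: "eventually (\<lambda>y. y \<in> s) (at p)"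
      using ps by (intro eventually_at_in_open') (auto simp: s_def)
    have "eventually (\<lambda>y. g y + - z \<noteq> 0) (at p)"
      using ev1 ev2 by eventually_elim auto
    then have fr: "frequently (\<lambda>y. g y + - z \<noteq> 0) (at p)"
      by (rule eventually_frequently[rotated]) simp
    have "0 < zorder (\<lambda>p. g p + - z) p \<longleftrightarrow> g p + - z = 0"
      by (rule zorder_pos_iff[OF holomorphic_on_subset[OF Fholo sB(1)] _ ps fr]) (simp add: s_def)
    then show ?thesis using that by (simp add: Z_def)
  qed
  have "int (card Z) = (\<Sum>p\<in>Z. 1)" by simp
  also have "\<dots> \<le> (\<Sum>p\<in>Z. zorder (\<lambda>p. g p + - z) p)" by (rule sum_mono[OF pos])
  finally have c1: "card Z \<le> 1" using sumZ by simp
  have "Z \<noteq> {}" using sumZ by auto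
  then have "card Z \<noteq> 0" using finZ by simp
  then have "card Z = 1" using c1 by linarith
  then obtain p0 where "Z = {p0}" by (rule card_1_singletonE)
  then show ?thesis unfolding Z_def by (metis (mono_tags, lifting) mem_Collect_eq singletonD singletonI)
qed

end

context single begin

lemma uniq: assumes z: "cmod z < 9 * m / 10" shows "\<exists>!w. cmod w < 1 / R \<and> g w = z"
proof -
  obtain \<rho>0 where r0: "10 / (11 * R) \<le> \<rho>0" "\<rho>0 < 1 / R"
    and bd: "\<forall>w. \<rho>0 < cmod w \<and> cmod w < 1 / R \<longrightarrow> 9 * m / 10 < cmod (g w)"
    using bdw by blast
  have r0pos: "0 \<le> \<rho>0" using r0(1) Rpos by (smt (verit) divide_pos_pos)
  define \<rho>1 where "\<rho>1 = (\<rho>0 + 1 / R) / 2"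
  have "\<exists>!p. p \<in> ball 0 \<rho>1 \<and> g p = z"
    by (rule count[OF r0pos _ _ bd z]) (use r0 in \<open>auto simp: \<rho>1_def\<close>)
  then obtain p where p: "p \<in> ball 0 \<rho>1" "g p = z" by blast
  have ex: "cmod p < 1 / R \<and> g p = z" using p r0 by (simp add: \<rho>1_def)
  have un: "w1 = w2" if w1: "cmod w1 < 1 / R" "g w1 = z" and w2: "cmod w2 < 1 / R" "g w2 = z" for w1 w2
  proof -
    define \<rho>2 where "\<rho>2 = (max \<rho>0 (max (cmod w1) (cmod w2)) + 1 / R) / 2"
    have "\<exists>!p. p \<in> ball 0 \<rho>2 \<and> g p = z"
      by (rule count[OF r0pos _ _ bd z]) (use r0 w1 w2 in \<open>auto simp: \<rho>2_def\<close>)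
    moreover have "w1 \<in> ball 0 \<rho>2" "w2 \<in> ball 0 \<rho>2" using w1 w2 r0 by (auto simp: \<rho>2_def)
    ultimately show ?thesis using w1 w2 by blast
  qed
  show ?thesis using ex un by blast
qed

lemma inv_exists: "\<exists>h. h holomorphic_on ball (0::complex) (9 * m / 10) \<and>
   (\<forall>z \<in> ball (0::complex) (9 * m / 10). cmod (h z) < 1 / R \<and> g (h z) = z \<and> deriv g (h z) * deriv h z = 1)"
proof -
  define S where "S = B \<inter> g -` ball (0::complex) (9 * m / 10)"
  have openS: "open S" unfolding S_def
    by (rule continuous_open_preimage[OF holomorphic_on_imp_continuous_on[OF g_holo] open_ball open_ball])
  have injS: "inj_on g S"
  proof (rule inj_onI)
    fix x y assume "x \<in> S" "y \<in> S" "g x = g y"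
    then show "x = y" using uniq[of "g x"] by (auto simp: S_def)
  qed
  have imS: "g ` S = ball (0::complex) (9 * m / 10)"
  proof
    show "g ` S \<subseteq> ball (0::complex) (9 * m / 10)" by (auto simp: S_def)
    show "ball (0::complex) (9 * m / 10) \<subseteq> g ` S"
    proof
      fix z assume "z \<in> ball (0::complex) (9 * m / 10)"
      then have zz: "cmod z < 9 * m / 10" by simp
      then obtain w where "cmod w < 1 / R" "g w = z" using uniq by blast
      then show "z \<in> g ` S" using zz by (auto simp: S_def)
    qed
  qed
  obtain h where h1: "h holomorphic_on (g ` S)" and h2: "\<And>z. z \<in> S \<Longrightarrow> deriv g z * deriv h (g z) = 1"
    and h3: "\<And>z. z \<in> S \<Longrightarrow> h (g z) = z"
    using holomorphic_has_inverse[OF holomorphic_on_subset[OF g_holo] openS injS] by (auto simp: S_def)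
  have "\<forall>z \<in> ball (0::complex) (9 * m / 10). cmod (h z) < 1 / R \<and> g (h z) = z \<and> deriv g (h z) * deriv h z = 1"
  proof
    fix z assume "z \<in> ball (0::complex) (9 * m / 10)"
    then obtain w where w: "w \<in> S" "z = g w" using imS by blast
    then show "cmod (h z) < 1 / R \<and> g (h z) = z \<and> deriv g (h z) * deriv h z = 1"
      using h2 h3 by (auto simp: S_def)
  qed
  then show ?thesis using h1 imS by auto
qed

end

context single begin

lemma Pf_nz: assumes "w \<in> B" shows "Pf w \<noteq> 0"
proof (cases "w = 0")
  case True then show ?thesis by (simp add: Pf0)
next
  case False
  show ?thesis
  proof
    assume "Pf w = 0"
    then have "g w = 0" using g_eq_on[OF assms] by simp
    then have "w \<in> {w. cmod w < 1 / R \<and> gfun M w = 0}" using assms by simp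
    then show False using gzero False by blast
  qed
qed

definition "Uf u = (aa^2 * u - Tf u + aa * u^2 * Tf u) / Pf u"

lemma Uf_holo: "Uf holomorphic_on B"
  unfolding Uf_def[abs_def] by (intro holomorphic_intros Tf_holo Pf_holo Pf_nz)

lemma B_ident: assumes u: "u \<in> B" "u \<noteq> 0" shows "1 / (u^2 * g u) = 1 / u^3 - aa / u + Uf u"
proof -
  define P where "P = Pf u"
  define T where "T = Tf u"
  have P0: "P \<noteq> 0" unfolding P_def using Pf_nz[OF u(1)] .
  have PT: "P = 1 + aa * u^2 + u^3 * T" unfolding P_def T_def Pf_def by simp
  have gu: "g u = u * P" unfolding P_def using g_eq_on[OF u(1)] .
  have "1 / (u^2 * g u) - (1 / u^3 - aa / u + Uf u)
      = (1 - (P * (1 - aa * u^2) + u^3 * (aa^2 * u - T + aa * u^2 * T))) / (u^3 * P)"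
    unfolding gu Uf_def P_def[symmetric] T_def[symmetric] using P0 u(2)
    by (simp add: field_simps power2_eq_square power3_eq_cube)
  also have "1 - (P * (1 - aa * u^2) + u^3 * (aa^2 * u - T + aa * u^2 * T)) = 0"
    unfolding PT by (simp add: algebra_simps power2_eq_square power3_eq_cube)
  finally show ?thesis by simp
qed

lemma Kfun_deriv:
  assumes z0: "0 < cmod z0" "cmod z0 < 9 * m / 10"
  obtains w0 gd where "cmod w0 < 1 / R" "g w0 = z0" "w0 \<noteq> 0" "gd \<noteq> 0" "(g has_field_derivative gd) (at w0)"
    "(Kfun M R has_field_derivative (- 1 / (gd * w0^2))) (at z0)"
proof -
  obtain h where hh: "h holomorphic_on ball (0::complex) (9 * m / 10)"
    and hp: "\<forall>z \<in> ball (0::complex) (9 * m / 10). cmod (h z) < 1 / R \<and> g (h z) = z \<and> deriv g (h z) * deriv h z = 1"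
    using inv_exists by blast
  define \<Omega> where "\<Omega> = ball (0::complex) (9 * m / 10)"
  have z0O: "z0 \<in> \<Omega>" using z0 by (simp add: \<Omega>_def)
  define w0 where "w0 = h z0"
  have w0: "cmod w0 < 1 / R" "g w0 = z0" "deriv g w0 * deriv h z0 = 1"
    using hp z0O unfolding w0_def \<Omega>_def by auto
  have w0nz: "w0 \<noteq> 0" using w0(2) g0 z0(1) by auto
  define gd where "gd = deriv g w0"
  have gdnz: "gd \<noteq> 0" using w0(3) unfolding gd_def by auto
  have dh: "deriv h z0 = 1 / gd" using w0(3) gdnz unfolding gd_def by (simp add: field_simps)
  have gder: "(g has_field_derivative gd) (at w0)" unfolding gd_def
    by (rule holomorphic_derivI[OF g_holo open_ball]) (use w0 in simp)
  have Keq: "inverse (h z) = Kfun M R z" if "z \<in> \<Omega>" for z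
  proof -
    have zz: "cmod z < 9 * m / 10" using that by (simp add: \<Omega>_def)
    have hz: "cmod (h z) < 1 / R \<and> g (h z) = z" using hp that by (simp add: \<Omega>_def)
    have "(THE w. cmod w < 1 / R \<and> gfun M w = z) = h z"
      by (rule the_equality) (use hz uniq[OF zz] in blast)+
    then show ?thesis by (simp add: Kfun_def inverse_eq_divide)
  qed
  have hder: "(h has_field_derivative deriv h z0) (at z0)"
    by (rule holomorphic_derivI[OF hh open_ball z0O[unfolded \<Omega>_def]])
  have "((\<lambda>z. inverse (h z)) has_field_derivative (- (deriv h z0 * inverse (h z0 ^ Suc (Suc 0))))) (at z0)"
    by (rule DERIV_inverse_fun[OF hder]) (use w0nz in \<open>simp add: w0_def\<close>)
  then have "(Kfun M R has_field_derivative (- (deriv h z0 * inverse (h z0 ^ Suc (Suc 0))))) (at z0)"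
    by (rule has_field_derivative_transform_within_open[OF _ _ z0O]) (auto simp: \<Omega>_def Keq)
  moreover have "- (deriv h z0 * inverse (h z0 ^ Suc (Suc 0))) = - 1 / (gd * w0^2)"
    unfolding dh w0_def[symmetric] by (simp add: field_simps power2_eq_square)
  ultimately show ?thesis using that w0 w0nz gdnz gder by auto
qed

lemma main_single:
  assumes z0: "0 < cmod z0" "cmod z0 < m / 4"
  shows "\<exists>K'. (Kfun M R has_field_derivative K') (at z0) \<and> cmod (K' + 1 / z0^2 - aa) \<le> 2 * cmod z0 * R / m^2"
proof -
  have z0': "cmod z0 < 9 * m / 10" using z0 mpos by simp
  have z0nz: "z0 \<noteq> 0" using z0 by auto
  obtain w0 gd where w0: "cmod w0 < 1 / R" "g w0 = z0" and w0nz: "w0 \<noteq> 0" and gdnz: "gd \<noteq> 0"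
    and gder: "(g has_field_derivative gd) (at w0)"
    and Kder: "(Kfun M R has_field_derivative (- 1 / (gd * w0^2))) (at z0)"
    using Kfun_deriv[OF z0(1) z0'] by blast
  have w0B: "w0 \<in> B" using w0 by simp
  have gdd: "deriv g w0 = gd" by (rule DERIV_imp_deriv[OF gder])
  obtain \<rho>0 where r0: "10 / (11 * R) \<le> \<rho>0" "\<rho>0 < 1 / R"
    and bd: "\<forall>w. \<rho>0 < cmod w \<and> cmod w < 1 / R \<longrightarrow> 9 * m / 10 < cmod (g w)"
    using bdw by blast
  define \<rho> where "\<rho> = (max \<rho>0 (cmod w0) + 1 / R) / 2"
  have rr: "\<rho>0 < \<rho>" "cmod w0 < \<rho>" "\<rho> < 1 / R" "10 / (11 * R) \<le> \<rho>"
    using r0 w0 by (auto simp: \<rho>_def)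
  have rpos: "0 < \<rho>" using rr(4) Rpos by (smt (verit) divide_pos_pos)
  have cbB: "cball 0 \<rho> \<subseteq> B" using rr by auto
  have bB: "ball 0 \<rho> \<subseteq> B" using cbB by auto
  have on_c: "9 * m / 10 < cmod (g u)" if "cmod u = \<rho>" for u
    using bd rr that by auto
  define Q where "Q = (\<lambda>w. if w = w0 then deriv g w0 else (g w - g w0) / (w - w0))"
  have Qholo: "Q holomorphic_on B" unfolding Q_def
    by (rule pole_lemma[OF g_holo]) (simp add: w0(1))
  have Qid: "Q w * (w - w0) = g w - z0" if "w \<in> B" for w
    using w0 by (cases "w = w0") (auto simp: Q_def)
  have Qnz: "Q w \<noteq> 0" if wB: "w \<in> B" for w
  proof (cases "w = w0")
    case True then show ?thesis using gdnz gdd by (simp add: Q_def)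
  next
    case False
    have "g w \<noteq> z0"
    proof
      assume "g w = z0"
      then have "w = w0" using uniq[OF z0'] w0 wB by auto
      then show False using False by simp
    qed
    then show ?thesis using False by (simp add: Q_def w0)
  qed
  define \<psi> where "\<psi> = (\<lambda>w. inverse (Q w))"
  have \<psi>holo: "\<psi> holomorphic_on B" unfolding \<psi>_def
    by (intro holomorphic_intros Qholo Qnz)
  have \<psi>w0: "\<psi> w0 = 1 / gd" by (simp add: \<psi>_def Q_def gdd inverse_eq_divide)
  have Q0: "Q 0 = z0 / w0" using w0nz w0 g0 by (simp add: Q_def)
  have \<psi>0: "\<psi> 0 = w0 / z0" by (simp add: \<psi>_def Q0)
  have Qder: "(Q has_field_derivative deriv Q 0) (at 0)"
    by (rule holomorphic_derivI[OF Qholo open_ball zeroB])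
  have dQ0: "deriv Q 0 * (0 - w0) + (1 - 0) * Q 0 = 1"
  proof -
    have d1: "((\<lambda>w. Q w * (w - w0)) has_field_derivative (deriv Q 0 * (0 - w0) + (1 - 0) * Q 0)) (at 0)"
      using DERIV_mult[OF Qder DERIV_diff[OF DERIV_ident DERIV_const]] by simp
    have d2: "((\<lambda>w. g w - z0) has_field_derivative (deriv Q 0 * (0 - w0) + (1 - 0) * Q 0)) (at 0)"
      by (rule has_field_derivative_transform_within_open[OF d1 open_ball zeroB]) (simp add: Qid)
    have d3: "((\<lambda>w. g w - z0) has_field_derivative (1 - 0)) (at 0)"
      by (rule DERIV_diff[OF g_deriv0 DERIV_const])
    show ?thesis using DERIV_unique[OF d2 d3] by simp
  qed
  have \<psi>der: "(\<psi> has_field_derivative (- (deriv Q 0 * inverse (Q 0 ^ Suc (Suc 0))))) (at 0)"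
    unfolding \<psi>_def by (rule DERIV_inverse_fun[OF Qder Qnz[OF zeroB]])
  have d\<psi>0: "deriv \<psi> 0 = (w0 - z0) / z0^2"
  proof -
    have "deriv Q 0 = (Q 0 - 1) / w0" using dQ0 w0nz by (simp add: field_simps)
    then have "- (deriv Q 0 * inverse (Q 0 ^ Suc (Suc 0))) = (w0 - z0) / z0^2"
      using w0nz z0nz by (simp add: Q0 field_simps power2_eq_square)
    then show ?thesis using DERIV_imp_deriv[OF \<psi>der] by simp
  qed
  let ?\<gamma> = "circlepath (0::complex) \<rho>"
  have \<psi>cont: "continuous_on (cball 0 \<rho>) \<psi>"
    by (rule holomorphic_on_imp_continuous_on[OF holomorphic_on_subset[OF \<psi>holo cbB]])
  have \<psi>hol: "\<psi> holomorphic_on ball 0 \<rho>" by (rule holomorphic_on_subset[OF \<psi>holo bB])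
  have I1: "((\<lambda>u. \<psi> u / (u - w0)) has_contour_integral (2 * of_real pi * \<i> * \<psi> w0)) ?\<gamma>"
    by (rule Cauchy_integral_circlepath[OF \<psi>cont \<psi>hol]) (use rr in simp)
  have I2: "((\<lambda>u. \<psi> u / (u - 0)) has_contour_integral (2 * of_real pi * \<i> * \<psi> 0)) ?\<gamma>"
    by (rule Cauchy_integral_circlepath[OF \<psi>cont \<psi>hol]) (use rpos in simp)
  have I3: "((\<lambda>u. \<psi> u / (u - 0) ^ Suc 1) has_contour_integral ((2 * pi * \<i>) / (fact 1) * (deriv ^^ 1) \<psi> 0)) ?\<gamma>"
    by (rule Cauchy_has_contour_integral_higher_derivative_circlepath[OF \<psi>cont \<psi>hol]) (use rpos in simp)
  have J1: "((\<lambda>u. (\<lambda>_. 1::complex) u / (u - 0) ^ Suc 2) has_contour_integral ((2 * pi * \<i>) / (fact 2) * (deriv ^^ 2) (\<lambda>_. 1) 0)) ?\<gamma>"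
    by (rule Cauchy_has_contour_integral_higher_derivative_circlepath) (use rpos in auto)
  have J2: "((\<lambda>u. (\<lambda>_. 1::complex) u / (u - 0)) has_contour_integral (2 * of_real pi * \<i> * 1)) ?\<gamma>"
    by (rule Cauchy_integral_circlepath) (use rpos in auto)
  have Ucont: "continuous_on (cball 0 \<rho>) (\<lambda>u. u * Uf u)"
    by (rule holomorphic_on_imp_continuous_on[OF holomorphic_on_subset[OF _ cbB]]) (intro holomorphic_intros Uf_holo)
  have J3: "((\<lambda>u. u * Uf u / (u - 0)) has_contour_integral (2 * of_real pi * \<i> * (0 * Uf 0))) ?\<gamma>"
    by (rule Cauchy_integral_circlepath[OF Ucont])
       (use holomorphic_on_subset[OF Uf_holo bB] rpos in \<open>auto intro!: holomorphic_intros\<close>)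
  define F where "F u = (\<psi> u / (u - w0)) / w0^2 - (\<psi> u / (u - 0)) / w0^2 - (\<psi> u / (u - 0) ^ Suc 1) / w0
      - ((\<lambda>_. 1::complex) u / (u - 0) ^ Suc 2 - aa * ((\<lambda>_. 1::complex) u / (u - 0)) + u * Uf u / (u - 0))" for u
  define IF where "IF = (2 * of_real pi * \<i> * \<psi> w0) / w0^2 - (2 * of_real pi * \<i> * \<psi> 0) / w0^2
      - ((2 * pi * \<i>) / (fact 1) * (deriv ^^ 1) \<psi> 0) / w0
      - ((2 * pi * \<i>) / (fact 2) * (deriv ^^ 2) (\<lambda>_. 1::complex) 0 - aa * (2 * of_real pi * \<i> * 1) + 2 * of_real pi * \<i> * (0 * Uf 0))"
  have IFint: "(F has_contour_integral IF) ?\<gamma>"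
    unfolding F_def[abs_def] IF_def
    by (intro has_contour_integral_diff has_contour_integral_add has_contour_integral_div has_contour_integral_lmul I1 I2 I3 J1 J2 J3)
  have IFval: "IF = 2 * of_real pi * \<i> * (1 / (gd * w0^2) - 1 / z0^2 + aa)"
    unfolding IF_def using w0nz z0nz gdnz by (simp add: \<psi>w0 \<psi>0 d\<psi>0 field_simps power2_eq_square)
  have Fpt: "F u = z0 / (u^2 * g u * (g u - z0))" if u: "u \<in> path_image ?\<gamma>" for u
  proof -
    have nu: "cmod u = \<rho>" using u rpos by simp
    have uB: "u \<in> B" using nu rr by simp
    have unz: "u \<noteq> 0" using nu rpos by auto
    have uw0: "u \<noteq> w0" using nu rr by auto
    have gu: "9 * m / 10 < cmod (g u)" by (rule on_c[OF nu])
    have gunz: "g u \<noteq> 0" using gu mpos by auto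
    have guz: "g u - z0 \<noteq> 0" using gu z0' by auto
    have qnz: "Q u \<noteq> 0" by (rule Qnz[OF uB])
    have qid: "g u - z0 = Q u * (u - w0)" using Qid[OF uB] by simp
    have Bu: "(\<lambda>_. 1::complex) u / (u - 0) ^ Suc 2 - aa * ((\<lambda>_. 1::complex) u / (u - 0)) + u * Uf u / (u - 0)
        = 1 / (u^2 * g u)"
      using B_ident[OF uB unz] unz by (simp add: power3_eq_cube power2_eq_square divide_inverse)
    have Au: "(\<psi> u / (u - w0)) / w0^2 - (\<psi> u / (u - 0)) / w0^2 - (\<psi> u / (u - 0) ^ Suc 1) / w0
        = 1 / (u^2 * (g u - z0))"
      unfolding qid \<psi>_def using unz uw0 w0nz qnz by (simp add: field_simps power2_eq_square)
    have "F u = 1 / (u^2 * (g u - z0)) - 1 / (u^2 * g u)" unfolding F_def Au Bu ..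
    also have "\<dots> = z0 / (u^2 * g u * (g u - z0))"
      using unz gunz guz by (simp add: field_simps)
    finally show ?thesis .
  qed
  define Bd where "Bd = cmod z0 / (\<rho>^2 * (9 * m / 10) * (13 * m / 20))"
  have Bd0: "0 \<le> Bd" unfolding Bd_def using mpos rpos by simp
  have Fbd: "cmod (F u) \<le> Bd" if nu: "cmod (u - 0) = \<rho>" for u
  proof -
    have u: "u \<in> path_image ?\<gamma>" using nu rpos by simp
    have nu': "cmod u = \<rho>" using nu by simp
    have gu: "9 * m / 10 < cmod (g u)" by (rule on_c[OF nu'])
    have guz: "13 * m / 20 < cmod (g u - z0)"
    proof -
      have "cmod (g u) \<le> cmod (g u - z0) + cmod z0" using norm_triangle_ineq4[of "g u - z0" "- z0"] by simp
      then show ?thesis using gu z0 by simp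
    qed
    have "cmod (F u) = cmod z0 / (\<rho>^2 * cmod (g u) * cmod (g u - z0))"
      unfolding Fpt[OF u] by (simp add: norm_divide norm_mult norm_power nu')
    also have "\<dots> \<le> Bd" unfolding Bd_def
    proof (rule divide_left_mono)
      have "(9 * m / 10) * (13 * m / 20) \<le> cmod (g u) * cmod (g u - z0)"
        using gu guz mpos by (intro mult_mono) auto
      then show "\<rho>^2 * (9 * m / 10) * (13 * m / 20) \<le> \<rho>^2 * cmod (g u) * cmod (g u - z0)"
        using rpos by (simp add: mult.assoc mult_left_mono)
      show "0 \<le> cmod z0" by simp
      show "0 < \<rho>^2 * cmod (g u) * cmod (g u - z0) * (\<rho>^2 * (9 * m / 10) * (13 * m / 20))"
        using rpos mpos gu guz by (intro mult_pos_pos) auto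
    qed
    finally show ?thesis .
  qed
  have IFbd: "cmod IF \<le> Bd * (2 * pi * \<rho>)"
    by (rule has_contour_integral_bound_circlepath[OF IFint Bd0 rpos Fbd])
  define D where "D = - 1 / (gd * w0^2) + 1 / z0^2 - aa"
  have Deq: "D = - IF / (2 * of_real pi * \<i>)"
    unfolding IFval D_def by (simp add: field_simps)
  have "cmod D = cmod IF / (2 * pi)"
    unfolding Deq by (simp add: norm_divide norm_mult)
  also have "\<dots> \<le> Bd * (2 * pi * \<rho>) / (2 * pi)"
    by (rule divide_right_mono[OF IFbd]) simp
  also have "\<dots> = Bd * \<rho>" by simp
  also have "\<dots> = (cmod z0 / m^2) * (200 / (117 * \<rho>))"
    unfolding Bd_def using rpos mpos by (simp add: field_simps power2_eq_square)
  also have "\<dots> \<le> (cmod z0 / m^2) * (2 * R)"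
  proof (rule mult_left_mono)
    have "10 / 11 \<le> R * \<rho>" using rr(4) Rpos by (simp add: field_simps)
    then have "200 \<le> 2 * R * (117 * \<rho>)" by simp
    then show "200 / (117 * \<rho>) \<le> 2 * R" using rpos by (simp add: divide_le_eq)
    show "0 \<le> cmod z0 / m^2" by simp
  qed
  also have "\<dots> = 2 * cmod z0 * R / m^2" by simp
  finally have "cmod D \<le> 2 * cmod z0 * R / m^2" .
  then show ?thesis using Kder unfolding D_def by blast
qed

end

context single begin
lemma main_single':
  assumes "0 < cmod z0" "cmod z0 < m / 4"
  shows "\<exists>K'. (Kfun M R has_field_derivative K') (at z0) \<and>
     cmod (K' + 1 / z0^2 - complex_of_real (\<integral>t. t ^ 2 \<partial>M)) \<le> 2 * cmod z0 * R / m^2"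
  using main_single[OF assms] by (simp add: aa_def Mo_def)

end

lemma final_ineq:
  fixes v D r s :: real
  assumes v: "0 < v" and D: "0 \<le> D" and r: "4 * D / v^2 \<le> r" and s: "0 < s" "s < 1 / sqrt v - r"
  shows "2 * s * D < (1 - v * s^2) / s^2"
proof -
  define q where "q = sqrt v"
  have q: "0 < q" "v = q^2" using v unfolding q_def by (simp_all add: real_sqrt_gt_0_iff)
  define x where "x = q * s"
  have x0: "0 < x" using q s by (simp add: x_def)
  have sq: "s < 1 / q - r" using s(2) by (simp add: q_def)
  have "q * s < q * (1 / q - r)" using sq q(1) by (rule mult_strict_left_mono[OF _ ])
  then have xr: "x < 1 - q * r" using q(1) unfolding x_def by (simp add: right_diff_distrib)
  have r0: "0 \<le> r" using r D v by (smt (verit) divide_nonneg_pos zero_less_power)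
  have x1: "x < 1" using xr r0 q by (smt (verit) mult_nonneg_nonneg)
  have "q * (4 * D / q^4) \<le> q * r" using r q by (intro mult_left_mono) (auto simp: power_mult[symmetric])
  then have qr: "4 * D / q^3 \<le> q * r" using q by (simp add: power_def field_simps)
  have "1 - x^2 \<ge> 1 - x" using x0 x1 by (simp add: power2_eq_square mult_le_cancel_left1 less_imp_le)
  then have A: "4 * D / q^3 < 1 - x^2" using xr qr by simp
  have "x^3 \<le> 1" using x0 x1 by (simp add: power_le_one)
  then have "D * x^3 \<le> D * 1" using D by (rule mult_left_mono)
  then have "2 * D * x^3 \<le> 4 * D" using D by simp
  then have "2 * D * x^3 / q^3 \<le> 4 * D / q^3" using q by (simp add: divide_right_mono)
  moreover have "2 * D * x^3 / q^3 = 2 * D * s^3" using q by (simp add: x_def power_mult_distrib)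
  ultimately have "2 * D * s^3 < 1 - x^2" using A by simp
  moreover have "x^2 = v * s^2" using q by (simp add: x_def power_mult_distrib)
  ultimately have "2 * D * s^3 < 1 - v * s^2" by simp
  then show ?thesis using s by (simp add: field_simps power2_eq_square power3_eq_cube)
qed

theorem lemma6:
  fixes k :: nat and \<mu> :: "nat \<Rightarrow> real measure"
    and L R m :: "nat \<Rightarrow> real" and r :: real
  assumes prob: "\<And>i. i < k \<Longrightarrow> prob_space (\<mu> i)"
    and borel: "\<And>i. i < k \<Longrightarrow> sets (\<mu> i) = sets borel"
    and bdd: "\<And>i. i < k \<Longrightarrow> (AE t in \<mu> i. \<bar>t\<bar> \<le> L i)"
    and mean0: "\<And>i. i < k \<Longrightarrow> (\<integral>t. t \<partial>\<mu> i) = 0"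
    and RL: "\<And>i. i < k \<Longrightarrow> L i \<le> R i"
    and Rpos: "\<And>i. i < k \<Longrightarrow> 0 < R i"
    and mpos: "\<And>i. i < k \<Longrightarrow> 0 < m i"
    and Gm: "\<And>i z. i < k \<Longrightarrow> cmod z = R i \<Longrightarrow> m i \<le> cmod (cauchy_transform (\<mu> i) z)"
    and gzero: "\<And>i. i < k \<Longrightarrow> {w. cmod w < 1 / R i \<and> gfun (\<mu> i) w = 0} = {0}"
    and i: "Min (m ` {..<k}) > 4 / sqrt (\<Sum>i<k. \<integral>t. t ^ 2 \<partial>\<mu> i)"
    and ii: "r \<ge> 4 * (\<Sum>i<k. R i / (m i)^2) / (\<Sum>i<k. \<integral>t. t ^ 2 \<partial>\<mu> i)^2"
  shows "\<forall>z. 0 < cmod z \<and> cmod z < 1 / sqrt (\<Sum>i<k. \<integral>t. t ^ 2 \<partial>\<mu> i) - r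
           \<longrightarrow> deriv (Ksum k \<mu> R) z \<noteq> 0"
proof (intro allI impI)
  fix z assume zz: "0 < cmod z \<and> cmod z < 1 / sqrt (\<Sum>i<k. \<integral>t. t ^ 2 \<partial>\<mu> i) - r"
  define v where "v = (\<Sum>i<k. \<integral>t. t ^ 2 \<partial>\<mu> i)"
  define D where "D = (\<Sum>i<k. R i / (m i)^2)"
  define s where "s = cmod z"
  have s0: "0 < s" using zz by (simp add: s_def)
  have vnn: "0 \<le> v" unfolding v_def by (intro sum_nonneg integral_nonneg_AE AE_I2) simp
  have D0: "0 \<le> D" unfolding D_def using Rpos by (intro sum_nonneg divide_nonneg_nonneg) (auto simp: less_imp_le)
  have rr: "4 * D / v^2 \<le> r" using ii unfolding v_def D_def .
  have r0: "0 \<le> r" using rr D0 by (smt (verit) divide_nonneg_nonneg zero_le_power2)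
  have sv: "s < 1 / sqrt v - r" using zz by (simp add: s_def v_def)
  have vpos: "0 < v"
  proof (rule ccontr)
    assume "\<not> 0 < v"
    then have "v = 0" using vnn by simp
    then show False using sv s0 r0 by simp
  qed
  have kpos: "0 < k"
  proof (rule ccontr)
    assume "\<not> 0 < k"
    then have "v = 0" by (simp add: v_def)
    then show False using vpos by simp
  qed
  have sv1: "s < 1 / sqrt v" using sv r0 by simp
  have mi: "s < m i / 4" if ik: "i < k" for i
  proof -
    have "Min (m ` {..<k}) \<le> m i" using ik by (intro Min_le) auto
    then have "4 / sqrt v < m i" using i unfolding v_def by simp
    moreover have "4 * s < 4 / sqrt v" using sv1 by simp
    ultimately show ?thesis by simp
  qed
  have loc: "single (\<mu> i) (R i) (m i)" if i: "i < k" for i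
    unfolding single_def single_axioms_def
    using prob[OF i] borel[OF i] mean0[OF i] Rpos[OF i] mpos[OF i] Gm[OF i] gzero[OF i]
      eventually_mono[OF bdd[OF i], of "\<lambda>t. \<bar>t\<bar> \<le> R i"] RL[OF i]
    by auto
  have "\<forall>i\<in>{..<k}. \<exists>K'. (Kfun (\<mu> i) (R i) has_field_derivative K') (at z) \<and>
     cmod (K' + 1 / z^2 - complex_of_real (\<integral>t. t ^ 2 \<partial>\<mu> i)) \<le> 2 * cmod z * R i / (m i)^2"
  proof
    fix i assume "i \<in> {..<k}"
    then have i: "i < k" by simp
    show "\<exists>K'. (Kfun (\<mu> i) (R i) has_field_derivative K') (at z) \<and>
     cmod (K' + 1 / z^2 - complex_of_real (\<integral>t. t ^ 2 \<partial>\<mu> i)) \<le> 2 * cmod z * R i / (m i)^2"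
      by (rule single.main_single'[OF loc[OF i]]) (use zz mi[OF i] in \<open>auto simp: s_def\<close>)
  qed
  then obtain Kd where Kd: "\<And>i. i \<in> {..<k} \<Longrightarrow> (Kfun (\<mu> i) (R i) has_field_derivative Kd i) (at z)"
    "\<And>i. i \<in> {..<k} \<Longrightarrow> cmod (Kd i + 1 / z^2 - complex_of_real (\<integral>t. t ^ 2 \<partial>\<mu> i)) \<le> 2 * cmod z * R i / (m i)^2"
    by metis
  have z0: "z \<noteq> 0" using s0 by (auto simp: s_def)
  have dsum: "((\<lambda>w. \<Sum>i<k. Kfun (\<mu> i) (R i) w) has_field_derivative (\<Sum>i<k. Kd i)) (at z)"
    by (rule DERIV_sum) (rule Kd(1))
  have dinv: "((\<lambda>w. of_nat (k - 1) / w) has_field_derivative - (of_nat (k - 1) / z^2)) (at z)"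
  proof -
    have "((\<lambda>w. of_nat (k - 1) * inverse w) has_field_derivative of_nat (k - 1) * (- (1 * inverse (z ^ Suc (Suc 0))))) (at z)"
      by (intro DERIV_cmult DERIV_inverse_fun DERIV_ident z0)
    then show ?thesis using z0 by (simp add: divide_inverse power2_eq_square)
  qed
  have KS: "Ksum k \<mu> R = (\<lambda>w. (\<Sum>i<k. Kfun (\<mu> i) (R i) w) - of_nat (k - 1) / w)"
    by (rule ext) (simp add: Ksum_def)
  have "(Ksum k \<mu> R has_field_derivative ((\<Sum>i<k. Kd i) - - (of_nat (k - 1) / z^2))) (at z)"
    unfolding KS by (rule DERIV_diff[OF dsum dinv])
  then have dK: "deriv (Ksum k \<mu> R) z = (\<Sum>i<k. Kd i) + of_nat (k - 1) / z^2"
    by (simp add: DERIV_imp_deriv)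
  define E where "E = (\<Sum>i<k. Kd i + 1 / z^2 - complex_of_real (\<integral>t. t ^ 2 \<partial>\<mu> i))"
  have dK2: "deriv (Ksum k \<mu> R) z = (complex_of_real v - 1 / z^2) + E"
  proof -
    have "E = (\<Sum>i<k. Kd i) + of_nat k * (1 / z^2) - complex_of_real v"
      unfolding E_def v_def by (simp add: sum.distrib sum_subtractf)
    moreover have "(of_nat (k - 1) :: complex) = of_nat k - 1" using kpos by (simp add: of_nat_diff)
    then have "(of_nat (k - 1) :: complex) / z^2 = of_nat k * (1 / z^2) - 1 / z^2"
      by (simp add: diff_divide_distrib)
    ultimately show ?thesis unfolding dK by (simp add: algebra_simps)
  qed
  have Ebd: "cmod E \<le> 2 * s * D"
  proof -
    have "cmod E \<le> (\<Sum>i<k. cmod (Kd i + 1 / z^2 - complex_of_real (\<integral>t. t ^ 2 \<partial>\<mu> i)))"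
      unfolding E_def by (rule norm_sum)
    also have "\<dots> \<le> (\<Sum>i<k. 2 * cmod z * R i / (m i)^2)" by (rule sum_mono) (rule Kd(2))
    also have "\<dots> = 2 * s * D" unfolding D_def s_def by (simp add: sum_distrib_left)
    finally show ?thesis .
  qed
  have Mbd: "(1 - v * s^2) / s^2 \<le> cmod (complex_of_real v - 1 / z^2)"
  proof -
    have eq: "complex_of_real v - 1 / z^2 = (complex_of_real v * z^2 - 1) / z^2" using z0 by (simp add: field_simps)
    have "1 \<le> cmod (complex_of_real v * z^2 - 1) + cmod (complex_of_real v * z^2)"
      using norm_triangle_ineq4[of "complex_of_real v * z^2" "complex_of_real v * z^2 - 1"] by (simp add: norm_minus_commute)
    then have "1 - v * s^2 \<le> cmod (complex_of_real v * z^2 - 1)" using vnn by (simp add: norm_mult norm_power s_def)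
    then have "(1 - v * s^2) / s^2 \<le> cmod (complex_of_real v * z^2 - 1) / s^2" using s0 by (simp add: divide_right_mono)
    also have "\<dots> = cmod (complex_of_real v - 1 / z^2)" unfolding eq by (simp add: norm_divide norm_power s_def)
    finally show ?thesis .
  qed
  have key: "2 * s * D < (1 - v * s^2) / s^2" by (rule final_ineq[OF vpos D0 rr s0 sv])
  have "cmod (complex_of_real v - 1 / z^2) \<le> cmod (deriv (Ksum k \<mu> R) z) + cmod E"
    unfolding dK2 using norm_triangle_ineq4[of "complex_of_real v - 1 / z^2 + E" "E"] by simp
  then have "0 < cmod (deriv (Ksum k \<mu> R) z)" using Mbd Ebd key by linarith
  then show "deriv (Ksum k \<mu> R) z \<noteq> 0" by auto
qed


end
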